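(* Let $p\in[0,1]$, $\lambda\in(0,1)$, let $E$ be a linear subspace of $\mathbb R^n$, let $A,C$ be origin-symmetric convex bodies in $E$ and $B,D$ origin-symmetric convex bodies in $E^\perp$. Then $$(1-\lambda)\cdot(A+B)+_p\lambda\cdot(C+D)=\big((1-\lambda)\cdot A+_p\lambda\cdot C\big)+\big((1-\lambda)\cdot B+_p\lambda\cdot D\big),$$ where on the left the $L_p$-combination is taken in $\mathbb R^n$, and on the right $(1-\lambda)\cdot A+_p\lambda\cdot C$ and $(1-\lambda)\cdot B+_p\lambda\cdot D$ denote the $L_p$-combinations in $E$ and $E^\perp$ respectively.
   Context: A convex body in a Euclidean space $F$ is a compact convex subset of $F$ with nonempty interior in $F$; $h_K(x)=\max_{y\in K}\langle x,y\rangle$. For a continuous $f$ on the unit sphere of $F$ with positive values, $W(f)$ is the largest convex body in $F$ whose support function is $\le f$ on that sphere. For convex bodies $K,L$ in $F$ containing the origin in their interior, $(1-\lambda)\cdot K+_p\lambda\cdot L:=W\big(((1-\lambda)h_K^p+\lambda h_L^p)^{1/p}\big)$ for $p\neq0$ and $W(h_K^{1-\lambda}h_L^\lambda)$ for $p=0$. $A+B$ denotes the Minkowski sum. *)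

theory Defs
  imports "HOL-Analysis.Analysis"
begin

definition convex_body_in :: "(real^'n) set \<Rightarrow> (real^'n) set \<Rightarrow> bool" where
  "convex_body_in F K \<longleftrightarrow> compact K \<and> convex K \<and> K \<subseteq> F \<and>
     (\<exists>U. openin (top_of_set F) U \<and> U \<noteq> {} \<and> U \<subseteq> K)"

definition origin_symmetric :: "(real^'n) set \<Rightarrow> bool" where
  "origin_symmetric K \<longleftrightarrow> (\<forall>x\<in>K. - x \<in> K)"

definition supp :: "(real^'n) set \<Rightarrow> real^'n \<Rightarrow> real" where
  "supp K x = Sup ((\<lambda>y. x \<bullet> y) ` K)"

definition unit_sphere_in :: "(real^'n) set \<Rightarrow> (real^'n) set" where
  "unit_sphere_in F = {u \<in> F. norm u = 1}"

definition Wulff :: "(real^'n) set \<Rightarrow> (real^'n \<Rightarrow> real) \<Rightarrow> (real^'n) set" where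
  "Wulff F f = (THE K. convex_body_in F K \<and> (\<forall>u\<in>unit_sphere_in F. supp K u \<le> f u) \<and>
      (\<forall>L. convex_body_in F L \<and> (\<forall>u\<in>unit_sphere_in F. supp L u \<le> f u) \<longrightarrow> L \<subseteq> K))"

definition Lp_comb :: "(real^'n) set \<Rightarrow> real \<Rightarrow> real \<Rightarrow> (real^'n) set \<Rightarrow> (real^'n) set \<Rightarrow> (real^'n) set" where
  "Lp_comb F p t K L =
     (if p = 0 then Wulff F (\<lambda>u. supp K u powr (1 - t) * supp L u powr t)
      else Wulff F (\<lambda>u. ((1 - t) * supp K u powr p + t * supp L u powr p) powr (1 / p)))"

definition minkowski_sum :: "(real^'n) set \<Rightarrow> (real^'n) set \<Rightarrow> (real^'n) set" where
  "minkowski_sum A B = {a + b | a b. a \<in> A \<and> b \<in> B}"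

end

theory Submission
  imports Defs
begin


definition Mp :: "real \<Rightarrow> real \<Rightarrow> real \<Rightarrow> real \<Rightarrow> real" where
  "Mp p t x y = (if p = 0 then x powr (1 - t) * y powr t
      else ((1 - t) * x powr p + t * y powr p) powr (1 / p))"

lemma Lp_comb_Mp: "Lp_comb F p t K L = Wulff F (\<lambda>u. Mp p t (supp K u) (supp L u))"
  unfolding Lp_comb_def Mp_def by (cases "p = 0") auto

lemma Mp_nonneg: "0 \<le> Mp p t x y"
  unfolding Mp_def by auto

lemma Mp_zero: "0 < p \<or> (0 < t \<and> t < 1) \<Longrightarrow> Mp p t 0 0 = 0"
  unfolding Mp_def by auto

lemma Mp_ge:
  assumes "0 \<le> p" "0 < t" "t < 1" "0 < m" "m \<le> x" "m \<le> y"
  shows "m \<le> Mp p t x y"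
proof (cases "p = 0")
  case True
  have "m = m powr (1 - t) * m powr t" using assms by (simp flip: powr_add)
  also have "\<dots> \<le> x powr (1 - t) * y powr t"
    using assms by (intro mult_mono powr_mono2) auto
  finally show ?thesis using True by (simp add: Mp_def)
next
  case False
  then have p: "0 < p" using assms by auto
  have "m = (m powr p) powr (1/p)" using p assms by (simp add: powr_powr)
  also have "\<dots> = ((1 - t) * m powr p + t * m powr p) powr (1/p)" by (simp add: algebra_simps)
  also have "\<dots> \<le> ((1 - t) * x powr p + t * y powr p) powr (1/p)"
    using assms p by (intro powr_mono2 add_mono mult_left_mono) auto
  finally show ?thesis using False by (simp add: Mp_def)
qed

lemma Mp_le:
  assumes "0 \<le> p" "0 < t" "t < 1" "0 \<le> x" "0 \<le> y" "x \<le> R" "y \<le> R"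
  shows "Mp p t x y \<le> R"
proof (cases "p = 0")
  case True
  have "x powr (1 - t) * y powr t \<le> R powr (1 - t) * R powr t"
    using assms by (intro mult_mono powr_mono2) auto
  also have "\<dots> = R" using assms by (simp flip: powr_add)
  finally show ?thesis using True by (simp add: Mp_def)
next
  case False
  then have p: "0 < p" using assms by auto
  have "((1 - t) * x powr p + t * y powr p) powr (1/p) \<le> ((1 - t) * R powr p + t * R powr p) powr (1/p)"
    using assms p by (intro powr_mono2 add_mono mult_left_mono) auto
  also have "\<dots> = (R powr p) powr (1/p)" by (simp add: algebra_simps)
  also have "\<dots> = R" using p assms by (simp add: powr_powr)
  finally show ?thesis using False by (simp add: Mp_def)
qed

lemma Mp_hom:
  assumes "0 \<le> p" "0 < c" "0 \<le> x" "0 \<le> y"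
  shows "Mp p t (c * x) (c * y) = c * Mp p t x y"
proof (cases "p = 0")
  case True
  have "(c * x) powr (1 - t) * (c * y) powr t = (c powr (1 - t) * c powr t) * (x powr (1 - t) * y powr t)"
    using assms by (simp add: powr_mult)
  also have "c powr (1 - t) * c powr t = c" using assms by (simp flip: powr_add)
  finally show ?thesis using True by (simp add: Mp_def)
next
  case False
  then have p: "0 < p" using assms by auto
  have "(1 - t) * (c * x) powr p + t * (c * y) powr p = c powr p * ((1 - t) * x powr p + t * y powr p)"
    using assms by (simp add: powr_mult algebra_simps)
  then have "((1 - t) * (c * x) powr p + t * (c * y) powr p) powr (1/p)
      = (c powr p) powr (1/p) * ((1 - t) * x powr p + t * y powr p) powr (1/p)"
    by (simp add: powr_mult)
  also have "(c powr p) powr (1/p) = c" using p assms by (simp add: powr_powr)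
  finally show ?thesis using False by (simp add: Mp_def)
qed

lemma holder2:
  fixes a b c d \<alpha> :: real
  assumes "0 \<le> \<alpha>" "\<alpha> \<le> 1" "0 < a" "0 < b" "0 < c" "0 < d"
  shows "a powr (1 - \<alpha>) * c powr \<alpha> + b powr (1 - \<alpha>) * d powr \<alpha>
     \<le> (a + b) powr (1 - \<alpha>) * (c + d) powr \<alpha>"
proof -
  define X where "X = a + b"
  define Y where "Y = c + d"
  have X: "0 < X" and Y: "0 < Y" using assms by (auto simp: X_def Y_def)
  have 1: "(a/X) powr (1 - \<alpha>) * (c/Y) powr \<alpha> \<le> (1 - \<alpha>) * (a/X) + \<alpha> * (c/Y)"
    using assms X Y by (intro Youngs_inequality_0) auto
  have 2: "(b/X) powr (1 - \<alpha>) * (d/Y) powr \<alpha> \<le> (1 - \<alpha>) * (b/X) + \<alpha> * (d/Y)"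
    using assms X Y by (intro Youngs_inequality_0) auto
  have "(1 - \<alpha>) * (a/X) + \<alpha> * (c/Y) + ((1 - \<alpha>) * (b/X) + \<alpha> * (d/Y)) = 1"
  proof -
    have "a/X + b/X = 1" "c/Y + d/Y = 1" using X Y by (simp_all add: X_def Y_def add_divide_distrib[symmetric])
    moreover have "(1 - \<alpha>) * (a/X) + \<alpha> * (c/Y) + ((1 - \<alpha>) * (b/X) + \<alpha> * (d/Y))
       = (1 - \<alpha>) * (a/X + b/X) + \<alpha> * (c/Y + d/Y)" by (simp add: algebra_simps)
    ultimately show ?thesis by simp
  qed
  with 1 2 have "(a/X) powr (1 - \<alpha>) * (c/Y) powr \<alpha> + (b/X) powr (1 - \<alpha>) * (d/Y) powr \<alpha> \<le> 1"
    by linarith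
  then have "(a powr (1 - \<alpha>) * c powr \<alpha> + b powr (1 - \<alpha>) * d powr \<alpha>) / (X powr (1 - \<alpha>) * Y powr \<alpha>) \<le> 1"
    using assms X Y by (simp add: powr_divide add_divide_distrib)
  moreover have "0 < X powr (1 - \<alpha>) * Y powr \<alpha>" using X Y by simp
  ultimately show ?thesis by (simp add: X_def Y_def divide_le_eq)
qed

lemma Mp_pos:
  assumes "0 < x" "0 < y" "0 < t" "t < 1" shows "0 < Mp p t x y"
proof -
  have "0 < (1 - t) * x powr p + t * y powr p" using assms by (intro add_pos_pos) auto
  then show ?thesis using assms unfolding Mp_def by auto
qed

lemma Mp_superadd:
  assumes "0 \<le> p" "p \<le> 1" "0 < t" "t < 1" "0 < a" "0 < b" "0 < c" "0 < d"
  shows "Mp p t a c + Mp p t b d \<le> Mp p t (a + b) (c + d)"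
proof (cases "p = 0")
  case True
  then show ?thesis using holder2[of t a b c d] assms by (simp add: Mp_def)
next
  case False
  then have p: "0 < p" using assms by auto
  define S where "S = Mp p t a c"
  define T where "T = Mp p t b d"
  have S: "0 < S" and T: "0 < T" using assms by (auto simp: S_def T_def Mp_pos)
  have Sp: "S powr p = (1 - t) * a powr p + t * c powr p"
    using p assms by (simp add: S_def Mp_def powr_powr)
  have Tp: "T powr p = (1 - t) * b powr p + t * d powr p"
    using p assms by (simp add: T_def Mp_def powr_powr)
  have h1: "S powr (1 - p) * a powr p + T powr (1 - p) * b powr p \<le> (S + T) powr (1 - p) * (a + b) powr p"
    using holder2[of p S T a b] assms S T by simp
  have h2: "S powr (1 - p) * c powr p + T powr (1 - p) * d powr p \<le> (S + T) powr (1 - p) * (c + d) powr p"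
    using holder2[of p S T c d] assms S T by simp
  define Q where "Q = (1 - t) * (a + b) powr p + t * (c + d) powr p"
  have "S + T = S powr (1 - p) * S powr p + T powr (1 - p) * T powr p"
    using S T by (simp flip: powr_add)
  also have "\<dots> = (1 - t) * (S powr (1 - p) * a powr p + T powr (1 - p) * b powr p)
      + t * (S powr (1 - p) * c powr p + T powr (1 - p) * d powr p)"
    unfolding Sp Tp by (simp add: algebra_simps)
  also have "\<dots> \<le> (1 - t) * ((S + T) powr (1 - p) * (a + b) powr p) + t * ((S + T) powr (1 - p) * (c + d) powr p)"
    using h1 h2 assms by (intro add_mono mult_left_mono) auto
  also have "\<dots> = (S + T) powr (1 - p) * Q" by (simp add: Q_def algebra_simps)
  finally have "S + T \<le> (S + T) powr (1 - p) * Q" .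
  then have "(S + T) powr 1 \<le> (S + T) powr (1 - p) * Q" using S T by simp
  then have "(S + T) powr (1 - p) * (S + T) powr p \<le> (S + T) powr (1 - p) * Q"
    by (simp flip: powr_add)
  then have "(S + T) powr p \<le> Q" using S T by (simp add: mult_le_cancel_left)
  then have "((S + T) powr p) powr (1/p) \<le> Q powr (1/p)"
    using S T p by (intro powr_mono2) auto
  then have "S + T \<le> Q powr (1/p)" using S T p by (simp add: powr_powr)
  then show ?thesis using False by (simp add: S_def T_def Q_def Mp_def)
qed



lemma supp_upper:
  assumes "bounded K" "y \<in> K" shows "u \<bullet> y \<le> supp K u"
proof -
  obtain B where B: "\<forall>x\<in>K. norm x \<le> B" using assms bounded_iff by blast
  have "bdd_above ((\<lambda>y. u \<bullet> y) ` K)"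
  proof (rule bdd_aboveI2)
    fix x assume "x \<in> K"
    then show "u \<bullet> x \<le> norm u * B"
      using B norm_cauchy_schwarz[of u x] by (meson mult_left_mono norm_ge_zero order_trans)
  qed
  then show ?thesis unfolding supp_def using assms by (intro cSup_upper) auto
qed

lemma supp_least:
  assumes "K \<noteq> {}" "\<And>y. y \<in> K \<Longrightarrow> u \<bullet> y \<le> c" shows "supp K u \<le> c"
  unfolding supp_def using assms by (intro cSup_least) auto

lemma supp_hom:
  assumes "bounded K" "K \<noteq> {}" "0 < c" shows "supp K (c *\<^sub>R u) = c * supp K u"
proof (rule antisym)
  show "supp K (c *\<^sub>R u) \<le> c * supp K u"
    using assms by (intro supp_least) (auto intro: mult_left_mono supp_upper)
  have "supp K u \<le> supp K (c *\<^sub>R u) / c"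
  proof (rule supp_least[OF assms(2)])
    fix y assume "y \<in> K"
    then have "(c *\<^sub>R u) \<bullet> y \<le> supp K (c *\<^sub>R u)" using supp_upper[OF assms(1)] by blast
    then have "c * (u \<bullet> y) \<le> supp K (c *\<^sub>R u)" by simp
    then show "u \<bullet> y \<le> supp K (c *\<^sub>R u) / c" using assms by (simp add: field_simps)
  qed
  then show "c * supp K u \<le> supp K (c *\<^sub>R u)" using assms by (simp add: field_simps)
qed

lemma supp_const0:
  assumes "K \<noteq> {}" "\<And>y. y \<in> K \<Longrightarrow> u \<bullet> y = 0" shows "supp K u = 0"
proof -
  have "(\<lambda>y. u \<bullet> y) ` K = {0}" using assms by auto
  then show ?thesis by (simp add: supp_def)
qed

lemma supp_cong:
  assumes "\<And>y. y \<in> K \<Longrightarrow> u \<bullet> y = v \<bullet> y" shows "supp K u = supp K v"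
  unfolding supp_def using assms by (metis image_cong)

lemma supp_sum:
  assumes "bounded A" "bounded B" "A \<noteq> {}" "B \<noteq> {}"
  shows "supp (minkowski_sum A B) u = supp A u + supp B u"
proof (rule antisym)
  show "supp (minkowski_sum A B) u \<le> supp A u + supp B u"
    using assms by (intro supp_least) (auto simp: minkowski_sum_def inner_add_right intro!: add_mono supp_upper)
  have bs: "bounded (minkowski_sum A B)"
  proof -
    have "minkowski_sum A B = (\<lambda>(a, b). a + b) ` (A \<times> B)" by (auto simp: minkowski_sum_def)
    then show ?thesis using bounded_plus[OF assms(1,2)] by (simp add: set_plus_image)
  qed
  let ?s = "supp (minkowski_sum A B) u"
  have "supp A u \<le> ?s - supp B u"
  proof (rule supp_least[OF assms(3)])
    fix a assume a: "a \<in> A"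
    have "supp B u \<le> ?s - u \<bullet> a"
    proof (rule supp_least[OF assms(4)])
      fix b assume "b \<in> B"
      then have "u \<bullet> (a + b) \<le> ?s" using a bs by (intro supp_upper) (auto simp: minkowski_sum_def)
      then show "u \<bullet> b \<le> ?s - u \<bullet> a" by (simp add: inner_add_right)
    qed
    then show "u \<bullet> a \<le> ?s - supp B u" by simp
  qed
  then show "supp A u + supp B u \<le> ?s" by simp
qed

lemma cb_basic:
  assumes "convex_body_in F K" shows "bounded K" "K \<noteq> {}" "K \<subseteq> F"
  using assms unfolding convex_body_in_def by (auto simp: compact_imp_bounded)

lemma cb_upper:
  assumes "convex_body_in F K" obtains R where "0 < R" "\<And>u. supp K u \<le> R * norm u"
proof -
  obtain R where R: "0 < R" "\<forall>x\<in>K. norm x \<le> R" using cb_basic[OF assms] bounded_pos by blast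
  have "supp K u \<le> R * norm u" for u
  proof (rule supp_least)
    show "K \<noteq> {}" using cb_basic[OF assms] by auto
    fix y assume "y \<in> K"
    then show "u \<bullet> y \<le> R * norm u" using R norm_cauchy_schwarz[of u y]
      by (metis mult.commute mult_left_mono norm_ge_zero order_trans)
  qed
  then show ?thesis using R that by blast
qed

lemma cb_lower:
  assumes "subspace F" "convex_body_in F K" "origin_symmetric K"
  obtains r where "0 < r" "\<And>v. v \<in> F \<Longrightarrow> r * norm v \<le> supp K v"
proof -
  obtain U where U: "openin (top_of_set F) U" "U \<noteq> {}" "U \<subseteq> K" and cv: "convex K"
    using assms(2) unfolding convex_body_in_def by auto
  obtain a where a: "a \<in> U" using U by auto
  obtain e where e: "0 < e" "\<forall>x'\<in>F. dist x' a < e \<longrightarrow> x' \<in> U"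
    using U(1) a unfolding openin_euclidean_subtopology_iff by blast
  have aF: "a \<in> F" using U(1) a openin_imp_subset by blast
  have bK: "(e/4) *\<^sub>R u \<in> K" if "u \<in> F" "norm u = 1" for u
  proof -
    have "a + (e/2) *\<^sub>R u \<in> F" using assms(1) aF that by (simp add: subspace_add subspace_scale)
    moreover have "dist (a + (e/2) *\<^sub>R u) a < e" using e that by (simp add: dist_norm)
    ultimately have 1: "a + (e/2) *\<^sub>R u \<in> K" using e U by blast
    have 2: "- a \<in> K" using assms(3) a U unfolding origin_symmetric_def by blast
    have "(1/2) *\<^sub>R (a + (e/2) *\<^sub>R u) + (1/2) *\<^sub>R (- a) \<in> K"
      using convexD[OF cv 1 2, of "1/2" "1/2"] by simp
    also have "(1/2) *\<^sub>R (a + (e/2) *\<^sub>R u) + (1/2) *\<^sub>R (- a) = (e/4) *\<^sub>R u"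
      by (simp add: algebra_simps)
    finally show ?thesis .
  qed
  have "e/4 * norm v \<le> supp K v" if v: "v \<in> F" for v
  proof (cases "v = 0")
    case True
    then show ?thesis using cb_basic[OF assms(2)] by (simp add: supp_const0)
  next
    case False
    let ?u = "(1 / norm v) *\<^sub>R v"
    have uF: "?u \<in> F" "norm ?u = 1" using v False assms(1) by (auto simp: subspace_scale)
    have "?u \<bullet> ((e/4) *\<^sub>R ?u) \<le> supp K ?u"
      using bK[OF uF] cb_basic[OF assms(2)] by (intro supp_upper) auto
    moreover have "?u \<bullet> ((e/4) *\<^sub>R ?u) = e/4 * (?u \<bullet> ?u)" by (simp only: inner_scaleR_right)
    moreover have "?u \<bullet> ?u = 1" using uF(2) by (metis norm_eq_1)
    ultimately have "e/4 \<le> supp K ?u" by (simp only: mult_1_right)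
    then have "norm v * (e/4) \<le> norm v * supp K ?u" by (intro mult_left_mono) auto
    also have "norm v * supp K ?u = supp K (norm v *\<^sub>R ?u)"
      using cb_basic[OF assms(2)] False by (simp add: supp_hom)
    also have "norm v *\<^sub>R ?u = v" using False by simp
    finally show ?thesis by (simp add: mult.commute)
  qed
  then show ?thesis using that[of "e/4"] e by auto
qed



lemma Wulff_eq:
  assumes F: "subspace F" and m: "0 < m"
    and fb: "\<And>u. u \<in> unit_sphere_in F \<Longrightarrow> m \<le> f u \<and> f u \<le> R"
  shows "Wulff F f = {x \<in> F. \<forall>u\<in>unit_sphere_in F. u \<bullet> x \<le> f u}"
proof -
  define W0 where "W0 = {x \<in> F. \<forall>u\<in>unit_sphere_in F. u \<bullet> x \<le> f u}"
  let ?P = "\<lambda>K. convex_body_in F K \<and> (\<forall>u\<in>unit_sphere_in F. supp K u \<le> f u) \<and>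
      (\<forall>L. convex_body_in F L \<and> (\<forall>u\<in>unit_sphere_in F. supp L u \<le> f u) \<longrightarrow> L \<subseteq> K)"
  have W0eq: "W0 = F \<inter> (\<Inter>u\<in>unit_sphere_in F. {x. u \<bullet> x \<le> f u})"
    by (auto simp: W0_def)
  have z: "0 \<in> W0" using F m fb by (force simp: W0_def subspace_0)
  have bnd: "bounded W0"
  proof -
    have "W0 \<subseteq> cball 0 (max R 0)"
    proof
      fix x assume x: "x \<in> W0"
      show "x \<in> cball 0 (max R 0)"
      proof (cases "x = 0")
        case False
        let ?u = "(1 / norm x) *\<^sub>R x"
        have uS: "?u \<in> unit_sphere_in F" using x False F
          by (auto simp: W0_def unit_sphere_in_def subspace_scale)
        have "?u \<bullet> x = (1 / norm x) * (x \<bullet> x)" by (simp only: inner_scaleR_left)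
        also have "x \<bullet> x = norm x * norm x" by (simp add: power2_norm_eq_inner[symmetric] power2_eq_square)
        finally have "?u \<bullet> x = norm x" using False by simp
        then have "norm x \<le> f ?u" using x uS by (auto simp: W0_def)
        then show ?thesis using fb[OF uS] by auto
      qed auto
    qed
    then show ?thesis using bounded_cball bounded_subset by blast
  qed
  have cl: "closed W0" unfolding W0eq
    by (intro closed_Int closed_INT closed_subspace F ballI closed_halfspace_le)
  have cv: "convex W0" unfolding W0eq
    by (intro convex_Int convex_INT subspace_imp_convex F ballI convex_halfspace_le)
  have inner: "ball 0 m \<inter> F \<subseteq> W0"
  proof
    fix x assume x: "x \<in> ball 0 m \<inter> F"
    show "x \<in> W0" unfolding W0_def
    proof (intro CollectI conjI ballI)
      show "x \<in> F" using x by auto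
      fix u assume u: "u \<in> unit_sphere_in F"
      have "u \<bullet> x \<le> norm u * norm x" by (rule norm_cauchy_schwarz)
      also have "\<dots> < m" using u x by (simp add: unit_sphere_in_def)
      finally show "u \<bullet> x \<le> f u" using fb[OF u] by linarith
    qed
  qed
  have cbW: "convex_body_in F W0"
    unfolding convex_body_in_def
  proof (intro conjI)
    show "compact W0" using bnd cl by (simp add: compact_eq_bounded_closed)
    show "convex W0" by (fact cv)
    show "W0 \<subseteq> F" by (auto simp: W0_def)
    show "\<exists>U. openin (top_of_set F) U \<and> U \<noteq> {} \<and> U \<subseteq> W0"
    proof (intro exI[of _ "F \<inter> ball 0 m"] conjI)
      show "openin (top_of_set F) (F \<inter> ball 0 m)" by (simp add: openin_open_Int)
      have "0 \<in> F \<inter> ball 0 m" using m F by (simp add: subspace_0)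
      then show "F \<inter> ball 0 m \<noteq> {}" by blast
      show "F \<inter> ball 0 m \<subseteq> W0" using inner by blast
    qed
  qed
  have maxi: "L \<subseteq> W0" if L: "convex_body_in F L" "\<forall>u\<in>unit_sphere_in F. supp L u \<le> f u" for L
  proof
    fix y assume y: "y \<in> L"
    show "y \<in> W0" unfolding W0_def
    proof (intro CollectI conjI ballI)
      show "y \<in> F" using cb_basic[OF L(1)] y by auto
      fix u assume u: "u \<in> unit_sphere_in F"
      have "u \<bullet> y \<le> supp L u" using cb_basic[OF L(1)] y by (intro supp_upper) auto
      then show "u \<bullet> y \<le> f u" using L(2) u by force
    qed
  qed
  have PW: "?P W0"
  proof (intro conjI allI impI ballI)
    show "convex_body_in F W0" by (fact cbW)
    fix u assume "u \<in> unit_sphere_in F"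
    then show "supp W0 u \<le> f u" using z by (intro supp_least) (auto simp: W0_def)
  next
    fix L assume "convex_body_in F L \<and> (\<forall>u\<in>unit_sphere_in F. supp L u \<le> f u)"
    then show "L \<subseteq> W0" using maxi by blast
  qed
  have "Wulff F f = W0" unfolding Wulff_def
  proof (rule the_equality)
    show "?P W0" by (fact PW)
    fix K assume K: "?P K"
    then have "K \<subseteq> W0" using maxi by blast
    moreover have "W0 \<subseteq> K" using K PW by blast
    ultimately show "K = W0" by auto
  qed
  then show ?thesis by (simp add: W0_def)
qed



lemma W_hom:
  assumes F: "subspace F" and K: "convex_body_in F K" "origin_symmetric K"
    and L: "convex_body_in F L" "origin_symmetric L"
    and p: "0 \<le> p" and t: "0 < t" "t < 1"
    and y: "\<forall>v\<in>unit_sphere_in F. v \<bullet> y \<le> Mp p t (supp K v) (supp L v)"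
    and v: "v \<in> F"
  shows "v \<bullet> y \<le> Mp p t (supp K v) (supp L v)"
proof (cases "v = 0")
  case True
  then show ?thesis by (simp add: Mp_nonneg)
next
  case False
  obtain rK where rK: "0 < rK" "\<And>v. v \<in> F \<Longrightarrow> rK * norm v \<le> supp K v" using cb_lower[OF F K] by blast
  obtain rL where rL: "0 < rL" "\<And>v. v \<in> F \<Longrightarrow> rL * norm v \<le> supp L v" using cb_lower[OF F L] by blast
  let ?u = "(1 / norm v) *\<^sub>R v"
  have uS: "?u \<in> unit_sphere_in F" using v False F by (auto simp: unit_sphere_in_def subspace_scale)
  have uF: "?u \<in> F" using uS by (simp add: unit_sphere_in_def)
  have n1: "norm ?u = 1" using uS by (simp add: unit_sphere_in_def)
  have sK: "0 \<le> supp K ?u" using rK(2)[OF uF] rK(1) n1 by (metis mult_1_right order_less_imp_le order_trans)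
  have sL: "0 \<le> supp L ?u" using rL(2)[OF uF] rL(1) n1 by (metis mult_1_right order_less_imp_le order_trans)
  have vv: "v = norm v *\<^sub>R ?u" using False by simp
  have nv: "0 < norm v" using False by simp
  have "v \<bullet> y = norm v * (?u \<bullet> y)" by (subst vv) (simp only: inner_scaleR_left)
  also have "\<dots> \<le> norm v * Mp p t (supp K ?u) (supp L ?u)" using y uS nv by (intro mult_left_mono) auto
  also have "\<dots> = Mp p t (norm v * supp K ?u) (norm v * supp L ?u)" using Mp_hom[OF p nv sK sL] by simp
  also have "\<dots> = Mp p t (supp K v) (supp L v)"
    using supp_hom[OF cb_basic(1,2)[OF K(1)] nv, of ?u] supp_hom[OF cb_basic(1,2)[OF L(1)] nv, of ?u] vv
    by simp
  finally show ?thesis .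
qed

theorem lemma3p1:
  fixes E :: "(real^'n) set" and A B C D :: "(real^'n) set" and p t :: real
  assumes "0 \<le> p" "p \<le> 1" "0 < t" "t < 1"
    and "subspace E"
    and "convex_body_in E A" "origin_symmetric A"
    and "convex_body_in E C" "origin_symmetric C"
    and "convex_body_in (orthogonal_comp E) B" "origin_symmetric B"
    and "convex_body_in (orthogonal_comp E) D" "origin_symmetric D"
  shows "Lp_comb UNIV p t (minkowski_sum A B) (minkowski_sum C D) =
         minkowski_sum (Lp_comb E p t A C) (Lp_comb (orthogonal_comp E) p t B D)"
proof -
  note p = assms(1,2) and t = assms(3,4) and E = assms(5)
  note A = assms(6,7) and C = assms(8,9) and B = assms(10,11) and D = assms(12,13)
  define P where "P = orthogonal_comp E"
  have P: "subspace P" by (simp add: P_def subspace_orthogonal_comp)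
  have B': "convex_body_in P B" and D': "convex_body_in P D" using B D by (simp_all add: P_def)
  have orth: "a \<bullet> w = 0" "w \<bullet> a = 0" if "a \<in> E" "w \<in> P" for a w
    using that by (auto simp: P_def orthogonal_comp_def orthogonal_def inner_commute)
  have decomp: "\<exists>y z. y \<in> E \<and> z \<in> P \<and> x = y + z" for x
  proof -
    have "x \<in> E + P" using subspace_sum_orthogonal_comp[OF E] by (simp add: P_def)
    then show ?thesis by (meson set_plus_elim)
  qed
  have AE: "A \<subseteq> E" "C \<subseteq> E" using cb_basic(3) A C by auto
  have BP: "B \<subseteq> P" "D \<subseteq> P" using cb_basic(3) B' D' by auto
  have bA: "bounded A" "A \<noteq> {}" using cb_basic A by auto
  have bB: "bounded B" "B \<noteq> {}" using cb_basic B by auto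
  have bC: "bounded C" "C \<noteq> {}" using cb_basic C by auto
  have bD: "bounded D" "D \<noteq> {}" using cb_basic D by auto
  obtain rA where rA: "0 < rA" "\<And>v. v \<in> E \<Longrightarrow> rA * norm v \<le> supp A v" using cb_lower[OF E A] by blast
  obtain rC where rC: "0 < rC" "\<And>v. v \<in> E \<Longrightarrow> rC * norm v \<le> supp C v" using cb_lower[OF E C] by blast
  obtain rB where rB: "0 < rB" "\<And>v. v \<in> P \<Longrightarrow> rB * norm v \<le> supp B v" using cb_lower[OF P B'] B by blast
  obtain rD where rD: "0 < rD" "\<And>v. v \<in> P \<Longrightarrow> rD * norm v \<le> supp D v" using cb_lower[OF P D'] D by blast
  obtain RA where RA: "0 < RA" "\<And>u. supp A u \<le> RA * norm u" using cb_upper[OF A(1)] by blast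
  obtain RB where RB: "0 < RB" "\<And>u. supp B u \<le> RB * norm u" using cb_upper[OF B(1)] by blast
  obtain RC where RC: "0 < RC" "\<And>u. supp C u \<le> RC * norm u" using cb_upper[OF C(1)] by blast
  obtain RD where RD: "0 < RD" "\<And>u. supp D u \<le> RD * norm u" using cb_upper[OF D(1)] by blast
  define r0 where "r0 = min (min rA rB) (min rC rD)"
  define R0 where "R0 = RA + RB + RC + RD"
  have r0: "0 < r0" using rA rB rC rD by (simp add: r0_def)
  have projE: "supp K u = supp K y" if "K \<subseteq> E" "y \<in> E" "z \<in> P" "u = y + z" for K u y z
    using that orth by (intro supp_cong) (auto simp: inner_add_left)
  have projP: "supp K u = supp K z" if "K \<subseteq> P" "y \<in> E" "z \<in> P" "u = y + z" for K u y z
    using that orth by (intro supp_cong) (auto simp: inner_add_left)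
  have sumAB: "supp (minkowski_sum A B) u = supp A u + supp B u" for u using supp_sum bA bB by blast
  have sumCD: "supp (minkowski_sum C D) u = supp C u + supp D u" for u using supp_sum bC bD by blast
  define f where "f u = Mp p t (supp (minkowski_sum A B) u) (supp (minkowski_sum C D) u)" for u
  have fb: "r0 \<le> f u \<and> f u \<le> R0" if u: "u \<in> unit_sphere_in UNIV" for u
  proof -
    have nu: "norm u = 1" using u by (simp add: unit_sphere_in_def)
    obtain y z where yz: "y \<in> E" "z \<in> P" "u = y + z" using decomp by blast
    have tri: "1 \<le> norm y + norm z" using nu yz norm_triangle_ineq[of y z] by simp
    have l1: "r0 \<le> supp A u + supp B u"
    proof -
      have "r0 * norm y \<le> rA * norm y" "r0 * norm z \<le> rB * norm z"
        by (intro mult_right_mono; simp add: r0_def)+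
      then have "r0 * (norm y + norm z) \<le> rA * norm y + rB * norm z"
        by (simp add: distrib_left)
      also have "\<dots> \<le> supp A u + supp B u"
        using rA(2)[OF yz(1)] rB(2)[OF yz(2)] projE[OF AE(1) yz] projP[OF BP(1) yz] by simp
      moreover have "r0 * 1 \<le> r0 * (norm y + norm z)" using tri r0 by (intro mult_left_mono) auto
      ultimately show ?thesis by simp
    qed
    have l2: "r0 \<le> supp C u + supp D u"
    proof -
      have "r0 * norm y \<le> rC * norm y" "r0 * norm z \<le> rD * norm z"
        by (intro mult_right_mono; simp add: r0_def)+
      then have "r0 * (norm y + norm z) \<le> rC * norm y + rD * norm z"
        by (simp add: distrib_left)
      also have "\<dots> \<le> supp C u + supp D u"
        using rC(2)[OF yz(1)] rD(2)[OF yz(2)] projE[OF AE(2) yz] projP[OF BP(2) yz] by simp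
      moreover have "r0 * 1 \<le> r0 * (norm y + norm z)" using tri r0 by (intro mult_left_mono) auto
      ultimately show ?thesis by simp
    qed
    have u1: "supp A u + supp B u \<le> R0" "supp C u + supp D u \<le> R0"
      using RA(2)[of u] RB(2)[of u] RC(2)[of u] RD(2)[of u] RA(1) RB(1) RC(1) RD(1) nu
      by (simp_all add: R0_def)
    show ?thesis unfolding f_def sumAB sumCD
      using Mp_ge[OF p(1) t r0 l1 l2] Mp_le[OF p(1) t _ _ u1] l1 l2 r0 by auto
  qed
  have LHS: "Lp_comb UNIV p t (minkowski_sum A B) (minkowski_sum C D)
      = {x \<in> UNIV. \<forall>u\<in>unit_sphere_in UNIV. u \<bullet> x \<le> f u}"
    unfolding Lp_comb_Mp f_def[symmetric] by (rule Wulff_eq[OF subspace_UNIV r0 fb])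
  define g where "g u = Mp p t (supp A u) (supp C u)" for u
  define k where "k u = Mp p t (supp B u) (supp D u)" for u
  have R1: "Lp_comb E p t A C = {x \<in> E. \<forall>u\<in>unit_sphere_in E. u \<bullet> x \<le> g u}"
    unfolding Lp_comb_Mp g_def[symmetric]
  proof (rule Wulff_eq[OF E r0])
    fix u assume u: "u \<in> unit_sphere_in E"
    then have uE: "u \<in> E" and nu: "norm u = 1" by (auto simp: unit_sphere_in_def)
    have "r0 \<le> supp A u" "r0 \<le> supp C u" using rA(2)[OF uE] rC(2)[OF uE] nu by (auto simp: r0_def)
    moreover have "supp A u \<le> R0" "supp C u \<le> R0"
      using RA(2)[of u] RC(2)[of u] RA(1) RB(1) RC(1) RD(1) nu by (auto simp: R0_def)
    ultimately show "r0 \<le> g u \<and> g u \<le> R0"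
      unfolding g_def using Mp_ge[OF p(1) t r0] Mp_le[OF p(1) t] r0 by auto
  qed
  have R2: "Lp_comb P p t B D = {x \<in> P. \<forall>u\<in>unit_sphere_in P. u \<bullet> x \<le> k u}"
    unfolding Lp_comb_Mp k_def[symmetric]
  proof (rule Wulff_eq[OF P r0])
    fix u assume u: "u \<in> unit_sphere_in P"
    then have uP: "u \<in> P" and nu: "norm u = 1" by (auto simp: unit_sphere_in_def)
    have "r0 \<le> supp B u" "r0 \<le> supp D u" using rB(2)[OF uP] rD(2)[OF uP] nu by (auto simp: r0_def)
    moreover have "supp B u \<le> R0" "supp D u \<le> R0"
      using RB(2)[of u] RD(2)[of u] RA(1) RB(1) RC(1) RD(1) nu by (auto simp: R0_def)
    ultimately show "r0 \<le> k u \<and> k u \<le> R0"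
      unfolding k_def using Mp_ge[OF p(1) t r0] Mp_le[OF p(1) t] r0 by auto
  qed
  have "{x \<in> UNIV. \<forall>u\<in>unit_sphere_in UNIV. u \<bullet> x \<le> f u} =
     minkowski_sum {x \<in> E. \<forall>u\<in>unit_sphere_in E. u \<bullet> x \<le> g u} {x \<in> P. \<forall>u\<in>unit_sphere_in P. u \<bullet> x \<le> k u}"
  proof (rule set_eqI, rule iffI)
    fix x assume x: "x \<in> {x \<in> UNIV. \<forall>u\<in>unit_sphere_in UNIV. u \<bullet> x \<le> f u}"
    obtain y z where yz: "y \<in> E" "z \<in> P" "x = y + z" using decomp by blast
    have "y \<in> {x \<in> E. \<forall>u\<in>unit_sphere_in E. u \<bullet> x \<le> g u}"
    proof (intro CollectI conjI ballI yz(1))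
      fix v assume v: "v \<in> unit_sphere_in E"
      then have vE: "v \<in> E" and "v \<in> unit_sphere_in UNIV" by (auto simp: unit_sphere_in_def)
      then have "v \<bullet> x \<le> f v" using x by auto
      moreover have "v \<bullet> x = v \<bullet> y" using yz orth[OF vE yz(2)] by (simp add: inner_add_right)
      moreover have "supp B v = 0" "supp D v = 0"
        using bB bD BP orth[OF vE] by (auto intro!: supp_const0)
      ultimately show "v \<bullet> y \<le> g v" by (simp add: f_def g_def sumAB sumCD)
    qed
    moreover have "z \<in> {x \<in> P. \<forall>u\<in>unit_sphere_in P. u \<bullet> x \<le> k u}"
    proof (intro CollectI conjI ballI yz(2))
      fix v assume v: "v \<in> unit_sphere_in P"
      then have vP: "v \<in> P" and "v \<in> unit_sphere_in UNIV" by (auto simp: unit_sphere_in_def)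
      then have "v \<bullet> x \<le> f v" using x by auto
      moreover have "v \<bullet> x = v \<bullet> z" using yz orth[OF yz(1) vP] by (simp add: inner_add_right)
      moreover have "supp A v = 0" "supp C v = 0"
        using bA bC AE orth[OF _ vP] by (auto intro!: supp_const0)
      ultimately show "v \<bullet> z \<le> k v" by (simp add: f_def k_def sumAB sumCD)
    qed
    ultimately show "x \<in> minkowski_sum {x \<in> E. \<forall>u\<in>unit_sphere_in E. u \<bullet> x \<le> g u} {x \<in> P. \<forall>u\<in>unit_sphere_in P. u \<bullet> x \<le> k u}"
      using yz(3) unfolding minkowski_sum_def by blast
  next
    fix x assume "x \<in> minkowski_sum {x \<in> E. \<forall>u\<in>unit_sphere_in E. u \<bullet> x \<le> g u} {x \<in> P. \<forall>u\<in>unit_sphere_in P. u \<bullet> x \<le> k u}"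
    then obtain y z where y: "y \<in> E" "\<forall>u\<in>unit_sphere_in E. u \<bullet> y \<le> g u"
      and z: "z \<in> P" "\<forall>u\<in>unit_sphere_in P. u \<bullet> z \<le> k u" and x: "x = y + z"
      unfolding minkowski_sum_def by blast
    have yall: "v \<bullet> y \<le> g v" if "v \<in> E" for v
      using W_hom[OF E A C p(1) t, of y v] y that by (simp add: g_def)
    have zall: "v \<bullet> z \<le> k v" if "v \<in> P" for v
      using W_hom[OF P B' B(2) D' D(2) p(1) t, of z v] z that by (simp add: k_def)
    show "x \<in> {x \<in> UNIV. \<forall>u\<in>unit_sphere_in UNIV. u \<bullet> x \<le> f u}"
    proof (intro CollectI conjI ballI UNIV_I)
      fix u :: "real^'n" assume u: "u \<in> unit_sphere_in UNIV"
      obtain uE uP where uu: "uE \<in> E" "uP \<in> P" "u = uE + uP" using decomp by blast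
      have "u \<bullet> x = uE \<bullet> y + uP \<bullet> z"
        using uu x orth[OF uu(1) z(1)] orth[OF y(1) uu(2)] by (simp add: inner_add_left inner_add_right)
      also have "\<dots> \<le> g uE + k uP" using yall[OF uu(1)] zall[OF uu(2)] by simp
      also have "g uE = g u" unfolding g_def using projE[OF AE(1) uu] projE[OF AE(2) uu] by simp
      also have "k uP = k u" unfolding k_def using projP[OF BP(1) uu] projP[OF BP(2) uu] by simp
      also have "g u + k u \<le> f u"
      proof -
        have sA: "supp A u = supp A uE" "supp C u = supp C uE" using projE[OF AE(1) uu] projE[OF AE(2) uu] by auto
        have sB: "supp B u = supp B uP" "supp D u = supp D uP" using projP[OF BP(1) uu] projP[OF BP(2) uu] by auto
        have nnB: "0 \<le> supp B uP" "0 \<le> supp D uP"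
          using order_trans[OF mult_nonneg_nonneg[OF less_imp_le[OF rB(1)] norm_ge_zero] rB(2)[OF uu(2)]]
            order_trans[OF mult_nonneg_nonneg[OF less_imp_le[OF rD(1)] norm_ge_zero] rD(2)[OF uu(2)]] by auto
        have nnA: "0 \<le> supp A uE" "0 \<le> supp C uE"
          using order_trans[OF mult_nonneg_nonneg[OF less_imp_le[OF rA(1)] norm_ge_zero] rA(2)[OF uu(1)]]
            order_trans[OF mult_nonneg_nonneg[OF less_imp_le[OF rC(1)] norm_ge_zero] rC(2)[OF uu(1)]] by auto
        show ?thesis
        proof (cases "uE = 0")
          case True
          then have "supp A uE = 0" "supp C uE = 0" using bA bC by (auto intro!: supp_const0)
          then show ?thesis using sA t by (simp add: f_def g_def k_def sumAB sumCD Mp_zero)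
        next
          case F1: False
          show ?thesis
          proof (cases "uP = 0")
            case True
            then have "supp B uP = 0" "supp D uP = 0" using bB bD by (auto intro!: supp_const0)
            then show ?thesis using sB t by (simp add: f_def g_def k_def sumAB sumCD Mp_zero)
          next
            case False
            have "0 < supp A uE" "0 < supp C uE"
              using less_le_trans[OF mult_pos_pos[OF rA(1)] rA(2)[OF uu(1)]]
                less_le_trans[OF mult_pos_pos[OF rC(1)] rC(2)[OF uu(1)]] F1 by auto
            moreover have "0 < supp B uP" "0 < supp D uP"
              using less_le_trans[OF mult_pos_pos[OF rB(1)] rB(2)[OF uu(2)]]
                less_le_trans[OF mult_pos_pos[OF rD(1)] rD(2)[OF uu(2)]] False by auto
            ultimately show ?thesis
              using Mp_superadd[OF p t, of "supp A u" "supp B u" "supp C u" "supp D u"] sA sB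
              by (simp add: f_def g_def k_def sumAB sumCD)
          qed
        qed
      qed
      finally show "u \<bullet> x \<le> f u" .
    qed
  qed
  then show ?thesis using LHS R1 R2 by (simp add: P_def)
qed


end
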